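(* Let $G$ be a group and $H\le G$ a subnormal subgroup of finite index. If $q$ is a prime dividing $[G:H]$, then there exists $g\in G$ with $\mathrm{ord}_H(g)=q$.
   Context: $H$ is subnormal in $G$ if there is a chain $H=H_0\le H_1\le\dots\le H_m=G$ with each $H_j$ normal in $H_{j+1}$. For $g\in G$, the relative order is $\mathrm{ord}_H(g)=\min\{n>0\mid g^n\in H\}$. *)

theory Defs
  imports "HOL-Algebra.Algebra"
begin

definition subnormal :: "'a set \<Rightarrow> ('a, 'b) monoid_scheme \<Rightarrow> bool" where
  "subnormal H G \<longleftrightarrow>
     (\<exists>Hs :: 'a set list. Hs \<noteq> [] \<and> hd Hs = H \<and> last Hs = carrier G \<and>
        (\<forall>j. Suc j < length Hs \<longrightarrow>
             subgroup (Hs ! Suc j) G \<and>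
             normal (Hs ! j) (G\<lparr>carrier := Hs ! Suc j\<rparr>)))"

definition rel_ord :: "('a, 'b) monoid_scheme \<Rightarrow> 'a set \<Rightarrow> 'a \<Rightarrow> nat" where
  "rel_ord G H g = (LEAST n::nat. 0 < n \<and> g [^]\<^bsub>G\<^esub> n \<in> H)"

end

theory Submission
  imports Defs
begin


lemma pow_restrict: "x [^]\<^bsub>G\<lparr>carrier := K\<rparr>\<^esub> (n::nat) = x [^]\<^bsub>G\<^esub> n"
  by (simp add: nat_pow_def)

lemma subgroup_pow_closed:
  assumes "subgroup K G" "x \<in> K" shows "x [^]\<^bsub>G\<^esub> (n::nat) \<in> K"
  by (induct n) (auto simp: assms subgroup.one_closed subgroup.m_closed)

lemma solve_aux:
  assumes "group G" "a \<in> carrier G" "b \<in> carrier G" "c = a \<otimes>\<^bsub>G\<^esub> b"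
  shows "b = inv\<^bsub>G\<^esub> a \<otimes>\<^bsub>G\<^esub> c"
proof -
  interpret group G by fact
  show ?thesis using assms(2-4) by (simp add: m_assoc[symmetric])
qed

lemma rel_ord_basic:
  fixes G (structure) and n :: nat
  assumes "group G" "subgroup H G" "g \<in> carrier G" "0 < n" "g [^]\<^bsub>G\<^esub> n \<in> H"
  shows "0 < rel_ord G H g \<and> g [^]\<^bsub>G\<^esub> rel_ord G H g \<in> H \<and> rel_ord G H g dvd n"
proof -
  interpret group G by fact
  let ?e = "rel_ord G H g"
  have ex: "0 < n \<and> g [^] n \<in> H" using assms by auto
  have e: "0 < ?e \<and> g [^] ?e \<in> H"
    unfolding rel_ord_def by (rule LeastI[of _ n], rule ex)
  have min: "\<And>k. 0 < k \<Longrightarrow> g [^] k \<in> H \<Longrightarrow> ?e \<le> k"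
    unfolding rel_ord_def by (rule Least_le) simp
  have "g [^] n = g [^] (?e * (n div ?e) + n mod ?e)" by simp
  also have "\<dots> = g [^] (?e * (n div ?e)) \<otimes> g [^] (n mod ?e)"
    using assms(3) by (simp add: nat_pow_mult)
  also have "\<dots> = (g [^] ?e) [^] (n div ?e) \<otimes> g [^] (n mod ?e)"
    using assms(3) by (simp add: nat_pow_pow)
  finally have eq: "g [^] n = (g [^] ?e) [^] (n div ?e) \<otimes> g [^] (n mod ?e)" .
  have sol: "g [^] (n mod ?e) = inv ((g [^] ?e) [^] (n div ?e)) \<otimes> g [^] n"
    by (rule solve_aux[OF assms(1) _ _ eq]) (use assms(3) in simp_all)
  have iH: "inv ((g [^] ?e) [^] (n div ?e)) \<in> H"
    by (rule subgroup.m_inv_closed[OF assms(2) subgroup_pow_closed[OF assms(2)]]) (use e in simp)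
  have r: "g [^] (n mod ?e) \<in> H"
    unfolding sol by (rule subgroup.m_closed[OF assms(2) iH assms(5)])
  have "n mod ?e = 0"
  proof (rule ccontr)
    assume "n mod ?e \<noteq> 0"
    hence "?e \<le> n mod ?e" using min r by simp
    moreover have "n mod ?e < ?e" using e by simp
    ultimately show False by simp
  qed
  thus ?thesis using e by (simp add: mod_eq_0_iff_dvd)
qed

lemma rel_ord_prime:
  fixes G (structure) and q :: nat
  assumes "group G" "subgroup H G" "g \<in> carrier G" "Factorial_Ring.prime q"
    "g [^]\<^bsub>G\<^esub> q \<in> H" "g \<notin> H"
  shows "rel_ord G H g = q"
proof -
  interpret group G by fact
  have q0: "0 < q" using assms(4) prime_gt_0_nat by blast
  from rel_ord_basic[OF assms(1-3) q0 assms(5)]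
  have b: "0 < rel_ord G H g" "g [^] rel_ord G H g \<in> H" "rel_ord G H g dvd q" by auto
  have "rel_ord G H g \<noteq> 1" using b(2) assms(3,6) by auto
  thus ?thesis using b(3) assms(4) by (metis prime_nat_iff)
qed

lemma rel_lift:
  fixes G (structure) and q N :: nat
  assumes "group G" "subgroup H G" "subgroup H1 G" "H \<subseteq> H1" "g \<in> carrier G" "Factorial_Ring.prime q"
    "g [^]\<^bsub>G\<^esub> q \<in> H1" "g \<notin> H1" "0 < N" "g [^]\<^bsub>G\<^esub> N \<in> H"
  shows "\<exists>m::nat. (g [^]\<^bsub>G\<^esub> m) [^]\<^bsub>G\<^esub> q \<in> H \<and> g [^]\<^bsub>G\<^esub> m \<notin> H"
proof -
  interpret group G by fact
  let ?d = "rel_ord G H g"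
  from rel_ord_basic[OF assms(1,2,5,9,10)]
  have d: "0 < ?d" "g [^] ?d \<in> H" by auto
  have "rel_ord G H1 g = q" using rel_ord_prime[OF assms(1,3,5,6,7,8)] .
  moreover have "rel_ord G H1 g dvd ?d"
    using rel_ord_basic[OF assms(1,3,5) d(1)] d(2) assms(4) by blast
  ultimately obtain s where s: "?d = q * s" by blast
  have s0: "0 < s" using s d(1) by (cases s) auto
  have q1: "1 < q" using assms(6) prime_gt_1_nat by blast
  have "(g [^] s) [^] q \<in> H" using d(2) s assms(5) by (simp add: nat_pow_pow mult.commute)
  moreover have "g [^] s \<notin> H"
  proof
    assume "g [^] s \<in> H"
    hence "?d \<le> s" unfolding rel_ord_def using s0 by (intro Least_le) simp
    moreover have "s < ?d" using s s0 q1 by simp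
    ultimately show False by simp
  qed
  ultimately show ?thesis by (intro exI[of _ s]) simp
qed


lemma coset_pow:
  fixes G (structure)
  assumes "normal H G" "x \<in> carrier G"
  shows "(H #> x) [^]\<^bsub>G Mod H\<^esub> (n::nat) = H #> (x [^] n)"
proof (induct n)
  case 0
  interpret normal H G by fact
  show ?case by (simp add: FactGroup_def subset)
next
  case (Suc n)
  interpret normal H G by fact
  show ?case using Suc assms(2) by (simp add: FactGroup_def rcos_sum)
qed

lemma pow_in_normal:
  fixes G (structure)
  assumes "normal H G" "finite (rcosets H)" "x \<in> carrier G"
  shows "\<exists>N::nat. 0 < N \<and> x [^] N \<in> H"
proof -
  interpret normal H G by fact
  have Q: "group (G Mod H)" by (rule factorgroup_is_group)
  have o: "0 < order (G Mod H)" using assms(2)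
    by (simp add: order_def FactGroup_def card_gt_0_iff) (use subgroup_in_rcosets is_group in blast)
  have c: "H #> x \<in> carrier (G Mod H)" using assms(3) by (simp add: FactGroup_def rcosetsI subset)
  have "(H #> x) [^]\<^bsub>G Mod H\<^esub> order (G Mod H) = \<one>\<^bsub>G Mod H\<^esub>"
    using group.pow_order_eq_1[OF Q c] .
  hence "H #> (x [^] order (G Mod H)) = H" using coset_pow[OF assms(1,3)]
    by (simp add: FactGroup_def)
  hence "x [^] order (G Mod H) \<in> H"
    by (rule coset_join1[OF _ _ subgroup_axioms]) (use assms(3) in simp_all)
  thus ?thesis using o by blast
qed

lemma cauchy:
  fixes Q (structure) and p :: nat
  assumes "group Q" "finite (carrier Q)" "Factorial_Ring.prime p" "p dvd order Q"
  shows "\<exists>y\<in>carrier Q. y \<noteq> \<one> \<and> y [^] p = \<one>"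
proof -
  interpret group Q by fact
  define a where "a = multiplicity p (order Q)"
  have o0: "order Q \<noteq> 0" using assms(2) order_gt_0_iff_finite by auto
  have a0: "0 < a" unfolding a_def
    using prime_multiplicity_gt_zero_iff[OF prime_imp_prime_elem[OF assms(3)] o0] assms(4) by blast
  have "p ^ a dvd order Q" unfolding a_def by (rule multiplicity_dvd)
  then obtain m where m: "order Q = p ^ a * m" by blast
  obtain P where P: "subgroup P Q" "card P = p ^ a"
    using sylow_thm[OF assms(3) assms(1) m assms(2)] by blast
  have gR: "group (Q\<lparr>carrier := P\<rparr>)" using P(1) subgroup_imp_group by blast
  have p1: "1 < p" using assms(3) prime_gt_1_nat by blast
  have "p ^ 1 \<le> p ^ a" using a0 p1 by (intro power_increasing) auto
  hence cP: "1 < card P" using P(2) p1 by simp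
  have "\<exists>x\<in>P. x \<noteq> \<one>"
  proof (rule ccontr)
    assume "\<not> (\<exists>x\<in>P. x \<noteq> \<one>)"
    hence "P \<subseteq> {\<one>}" by blast
    hence "card P \<le> 1" using card_mono[of "{\<one>}" P] by simp
    thus False using cP by simp
  qed
  then obtain x where x: "x \<in> P" "x \<noteq> \<one>" by blast
  have xc: "x \<in> carrier Q" by (rule subgroup.mem_carrier[OF P(1) x(1)])
  have xR: "x \<in> carrier (Q\<lparr>carrier := P\<rparr>)" using x(1) by simp
  have "x [^]\<^bsub>Q\<lparr>carrier := P\<rparr>\<^esub> order (Q\<lparr>carrier := P\<rparr>) = \<one>\<^bsub>Q\<lparr>carrier := P\<rparr>\<^esub>"
    by (rule group.pow_order_eq_1[OF gR xR])
  hence xa: "x [^] (p ^ a) = \<one>" unfolding pow_restrict order_def using P(2) by simp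
  define k where "k = (LEAST k. x [^] (p ^ k) = \<one>)"
  have k1: "x [^] (p ^ k) = \<one>" unfolding k_def by (rule LeastI[of _ a], rule xa)
  have k0: "k \<noteq> 0"
  proof
    assume "k = 0"
    hence "x [^] (1::nat) = \<one>" using k1 by simp
    thus False using x(2) xc by simp
  qed
  then obtain j where j: "k = Suc j" by (cases k) auto
  have "x [^] (p ^ j) \<noteq> \<one>"
    using not_less_Least[of j "\<lambda>k. x [^] (p ^ k) = \<one>"] j unfolding k_def by auto
  moreover have "(x [^] (p ^ j)) [^] p = \<one>"
  proof -
    have "(x [^] (p ^ j)) [^] p = x [^] (p ^ j * p)" using xc by (rule nat_pow_pow)
    also have "p ^ j * p = p ^ k" using j by simp
    finally show ?thesis using k1 by simp
  qed
  moreover have "x [^] (p ^ j) \<in> carrier Q" using xc by simp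
  ultimately show ?thesis by blast
qed

lemma index_mult:
  fixes G (structure)
  assumes "group G" "subgroup H G" "subgroup H1 G" "H \<subseteq> H1" "finite (rcosets H)"
  shows "finite (rcosets H1) \<and> finite (rcosets\<^bsub>G\<lparr>carrier := H1\<rparr>\<^esub> H) \<and>
     card (rcosets H) = card (rcosets H1) * card (rcosets\<^bsub>G\<lparr>carrier := H1\<rparr>\<^esub> H)"
proof -
  interpret group G by fact
  define T where "T = rcosets\<^bsub>G\<lparr>carrier := H1\<rparr>\<^esub> H"
  have T: "T = (\<lambda>h. H #> h) ` H1" unfolding T_def RCOSETS_def r_coset_def by auto
  have HG: "H \<subseteq> carrier G" by (rule subgroup.subset[OF assms(2)])
  have H1G: "H1 \<subseteq> carrier G" by (rule subgroup.subset[OF assms(3)])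
  have H1H: "H1 <#> H = H1"
  proof
    show "H1 <#> H \<subseteq> H1" unfolding set_mult_def using subgroup.m_closed[OF assms(3)] assms(4) by auto
    show "H1 \<subseteq> H1 <#> H"
    proof
      fix x assume x: "x \<in> H1"
      have "x = x \<otimes> \<one>" using subgroup.mem_carrier[OF assms(3) x] by simp
      thus "x \<in> H1 <#> H" unfolding set_mult_def using x subgroup.one_closed[OF assms(2)] by auto
    qed
  qed
  have pi: "\<And>x. x \<in> carrier G \<Longrightarrow> H1 <#> (H #> x) = H1 #> x"
    by (simp add: setmult_rcos_assoc HG H1G H1H)
  define F where "F S = {C \<in> rcosets H. H1 <#> C = S}" for S
  have img: "(\<lambda>C. H1 <#> C) ` (rcosets H) = rcosets H1"
  proof
    show "(\<lambda>C. H1 <#> C) ` (rcosets H) \<subseteq> rcosets H1"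
    proof
      fix S assume "S \<in> (\<lambda>C. H1 <#> C) ` (rcosets H)"
      then obtain x where x: "x \<in> carrier G" "S = H1 <#> (H #> x)" unfolding RCOSETS_def by auto
      show "S \<in> rcosets H1" using x pi[OF x(1)] rcosetsI[OF H1G x(1)] by simp
    qed
    show "rcosets H1 \<subseteq> (\<lambda>C. H1 <#> C) ` (rcosets H)"
    proof
      fix S assume "S \<in> rcosets H1"
      then obtain x where x: "x \<in> carrier G" "S = H1 #> x" unfolding RCOSETS_def by auto
      have "S = H1 <#> (H #> x)" using pi[OF x(1)] x(2) by simp
      moreover have "H #> x \<in> rcosets H" by (rule rcosetsI[OF HG x(1)])
      ultimately show "S \<in> (\<lambda>C. H1 <#> C) ` (rcosets H)" by (rule image_eqI)
    qed
  qed
  have fin1: "finite (rcosets H1)" using img assms(5) finite_imageI by metis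
  have fib: "F (H1 #> y) = (\<lambda>D. D #> y) ` T" if y: "y \<in> carrier G" for y
  proof
    show "F (H1 #> y) \<subseteq> (\<lambda>D. D #> y) ` T"
    proof
      fix C assume "C \<in> F (H1 #> y)"
      hence C: "C \<in> rcosets H" "H1 <#> C = H1 #> y" unfolding F_def by auto
      then obtain x where x: "x \<in> carrier G" "C = H #> x" unfolding RCOSETS_def by auto
      have "H1 #> y = H1 #> x" using C(2) pi[OF x(1)] x(2) by simp
      hence "x \<in> H1 #> y" by (rule repr_independenceD[OF assms(3) x(1)])
      hence h: "x \<otimes> inv y \<in> H1" by (rule subgroup.rcos_module_imp[OF assms(3) is_group y])
      have hc: "x \<otimes> inv y \<in> carrier G" using x(1) y by simp
      have "(H #> (x \<otimes> inv y)) #> y = H #> ((x \<otimes> inv y) \<otimes> y)"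
        by (rule coset_mult_assoc[OF HG hc y])
      also have "(x \<otimes> inv y) \<otimes> y = x" using x(1) y by (simp add: m_assoc)
      finally have "C = (H #> (x \<otimes> inv y)) #> y" using x(2) by simp
      moreover have "H #> (x \<otimes> inv y) \<in> T" unfolding T using h by blast
      ultimately show "C \<in> (\<lambda>D. D #> y) ` T" by blast
    qed
    show "(\<lambda>D. D #> y) ` T \<subseteq> F (H1 #> y)"
    proof
      fix C assume "C \<in> (\<lambda>D. D #> y) ` T"
      then obtain h where h: "h \<in> H1" "C = (H #> h) #> y" unfolding T by auto
      have hc: "h \<in> carrier G" using h(1) H1G by auto
      have C: "C = H #> (h \<otimes> y)" using h(2) coset_mult_assoc[OF HG hc y] by simp
      have hy: "h \<otimes> y \<in> carrier G" using hc y by simp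
      have "H1 <#> C = H1 #> (h \<otimes> y)" using C pi[OF hy] by simp
      also have "\<dots> = (H1 #> h) #> y" using coset_mult_assoc[OF H1G hc y] by simp
      also have "H1 #> h = H1" by (rule coset_join2[OF hc assms(3) h(1)])
      finally have "H1 <#> C = H1 #> y" .
      moreover have "C \<in> rcosets H" using C rcosetsI[OF HG hy] by simp
      ultimately show "C \<in> F (H1 #> y)" unfolding F_def by simp
    qed
  qed
  have inj: "inj_on (\<lambda>D. D #> y) T" if y: "y \<in> carrier G" for y
  proof
    fix D D' assume D: "D \<in> T" "D' \<in> T" and eq: "D #> y = D' #> y"
    have DG: "D \<subseteq> carrier G" "D' \<subseteq> carrier G" using D unfolding T
      using r_coset_subset_G[OF HG] H1G by auto
    have "D = (D #> y) #> inv y" using coset_mult_assoc[OF DG(1) y inv_closed[OF y]] y DG(1) by simp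
    also have "\<dots> = (D' #> y) #> inv y" using eq by simp
    also have "\<dots> = D'" using coset_mult_assoc[OF DG(2) y inv_closed[OF y]] y DG(2) by simp
    finally show "D = D'" .
  qed
  have Fsub: "F S \<subseteq> rcosets H" for S unfolding F_def by auto
  have finF: "finite (F S)" for S using Fsub assms(5) finite_subset by metis
  have finT: "finite T"
  proof -
    have "finite ((\<lambda>D. D #> \<one>) ` T)" using fib[OF one_closed] finF by metis
    thus ?thesis using finite_imageD inj[OF one_closed] by blast
  qed
  have cardF: "card (F S) = card T" if S: "S \<in> rcosets H1" for S
  proof -
    obtain y where y: "y \<in> carrier G" "S = H1 #> y" using S unfolding RCOSETS_def by auto
    show ?thesis using fib[OF y(1)] card_image[OF inj[OF y(1)]] y(2) by simp
  qed
  have U: "rcosets H = \<Union> (F ` (rcosets H1))"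
  proof
    show "rcosets H \<subseteq> \<Union> (F ` (rcosets H1))"
    proof
      fix C assume C: "C \<in> rcosets H"
      hence "H1 <#> C \<in> rcosets H1" using img by blast
      moreover have "C \<in> F (H1 <#> C)" using C unfolding F_def by simp
      ultimately show "C \<in> \<Union> (F ` (rcosets H1))" by blast
    qed
    show "\<Union> (F ` (rcosets H1)) \<subseteq> rcosets H" using Fsub by blast
  qed
  have "card (rcosets H) = (\<Sum>S\<in>rcosets H1. card (F S))"
    unfolding U by (rule card_UN_disjoint[OF fin1]) (use finF in \<open>auto simp: F_def\<close>)
  also have "\<dots> = (\<Sum>S\<in>rcosets H1. card T)" using cardF by simp
  also have "\<dots> = card (rcosets H1) * card T" by simp
  finally show ?thesis using fin1 finT unfolding T_def by simp
qed



lemma rcoset_restrict: "H #>\<^bsub>G\<lparr>carrier := K\<rparr>\<^esub> x = H #>\<^bsub>G\<^esub> x"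
  by (simp add: r_coset_def)

lemma chain_sub:
  fixes G (structure)
  shows "Hs \<noteq> [] \<Longrightarrow> (\<forall>j. Suc j < length Hs \<longrightarrow> subgroup (Hs ! Suc j) G \<and>
             normal (Hs ! j) (G\<lparr>carrier := Hs ! Suc j\<rparr>)) \<Longrightarrow> hd Hs \<subseteq> last Hs"
proof (induct Hs)
  case Nil
  then show ?case by simp
next
  case (Cons A Hs)
  show ?case
  proof (cases "Hs = []")
    case True
    then show ?thesis by simp
  next
    case False
    have c: "\<forall>j. Suc j < length Hs \<longrightarrow> subgroup (Hs ! Suc j) G \<and>
             normal (Hs ! j) (G\<lparr>carrier := Hs ! Suc j\<rparr>)"
    proof (intro allI impI)
      fix j assume "Suc j < length Hs"
      thus "subgroup (Hs ! Suc j) G \<and> normal (Hs ! j) (G\<lparr>carrier := Hs ! Suc j\<rparr>)"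
        using Cons(3) by (metis Suc_less_eq length_Cons nth_Cons_Suc)
    qed
    have "normal A (G\<lparr>carrier := Hs ! 0\<rparr>)" using Cons(3) False by fastforce
    hence "A \<subseteq> Hs ! 0" using subgroup.subset[OF normal_imp_subgroup] by fastforce
    hence "A \<subseteq> hd Hs" using False by (simp add: hd_conv_nth)
    moreover have "hd Hs \<subseteq> last Hs" using Cons(1)[OF False c] .
    ultimately show ?thesis using False by simp
  qed
qed

lemma chain_main:
  fixes G (structure) and q :: nat
  assumes G: "group G" and q: "Factorial_Ring.prime q"
  shows "Hs \<noteq> [] \<Longrightarrow> subgroup (hd Hs) G \<Longrightarrow> subgroup (last Hs) G \<Longrightarrow>
    (\<forall>j. Suc j < length Hs \<longrightarrow> subgroup (Hs ! Suc j) G \<and>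
             normal (Hs ! j) (G\<lparr>carrier := Hs ! Suc j\<rparr>)) \<Longrightarrow>
    finite (rcosets\<^bsub>G\<lparr>carrier := last Hs\<rparr>\<^esub> (hd Hs)) \<Longrightarrow>
    q dvd card (rcosets\<^bsub>G\<lparr>carrier := last Hs\<rparr>\<^esub> (hd Hs)) \<Longrightarrow>
    \<exists>g \<in> last Hs. g [^] q \<in> hd Hs \<and> g \<notin> hd Hs"
proof (induct Hs)
  case Nil
  then show ?case by simp
next
  case (Cons H Hs)
  interpret group G by (rule G)
  have q1: "1 < q" using q prime_gt_1_nat by blast
  show ?case
  proof (cases "Hs = []")
    case True
    have "rcosets\<^bsub>G\<lparr>carrier := H\<rparr>\<^esub> H = {H}"
    proof -
      have "H #> x = H" if "x \<in> H" for x
        by (rule coset_join2) (use that Cons(3) subgroup.mem_carrier[OF Cons(3)] in auto)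
      moreover have "H #> \<one> = H" using Cons(3) subgroup.subset[OF Cons(3)] by simp
      moreover have "\<one> \<in> H" using subgroup.one_closed[OF Cons(3)] by simp
      ultimately show ?thesis unfolding RCOSETS_def rcoset_restrict using True by auto
    qed
    hence "q dvd 1" using Cons(7) True by simp
    thus ?thesis using q1 by simp
  next
    case False
    define H1 where "H1 = hd Hs"
    define K where "K = last Hs"
    have hdH: "hd (H # Hs) = H" and lastK: "last (H # Hs) = K" using False K_def by auto
    have c: "\<forall>j. Suc j < length Hs \<longrightarrow> subgroup (Hs ! Suc j) G \<and>
             normal (Hs ! j) (G\<lparr>carrier := Hs ! Suc j\<rparr>)"
    proof (intro allI impI)
      fix j assume "Suc j < length Hs"
      thus "subgroup (Hs ! Suc j) G \<and> normal (Hs ! j) (G\<lparr>carrier := Hs ! Suc j\<rparr>)"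
        using Cons(5) by (metis Suc_less_eq length_Cons nth_Cons_Suc)
    qed
    have c0: "subgroup (Hs ! 0) G \<and> normal H (G\<lparr>carrier := Hs ! 0\<rparr>)"
      using Cons(5) False by fastforce
    have h0: "Hs ! 0 = H1" using False H1_def by (simp add: hd_conv_nth)
    have H1s: "subgroup H1 G" and nH: "normal H (G\<lparr>carrier := H1\<rparr>)" using c0 h0 by auto
    have Hs: "subgroup H G" using Cons(3) by simp
    have Ks: "subgroup K G" using Cons(4) lastK by simp
    have HH1: "H \<subseteq> H1" using subgroup.subset[OF normal_imp_subgroup[OF nH]] by simp
    have H1K: "H1 \<subseteq> K" unfolding H1_def K_def by (rule chain_sub[OF False c])
    have gK: "group (G\<lparr>carrier := K\<rparr>)" by (rule subgroup_imp_group[OF Ks])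
    have HsK: "subgroup H (G\<lparr>carrier := K\<rparr>)" by (rule subgroup_incl[OF Hs Ks]) (use HH1 H1K in auto)
    have H1sK: "subgroup H1 (G\<lparr>carrier := K\<rparr>)" by (rule subgroup_incl[OF H1s Ks H1K])
    have finH: "finite (rcosets\<^bsub>G\<lparr>carrier := K\<rparr>\<^esub> H)" using Cons(6) hdH lastK by simp
    from index_mult[OF gK HsK H1sK HH1 finH]
    have im: "finite (rcosets\<^bsub>G\<lparr>carrier := K\<rparr>\<^esub> H1)" "finite (rcosets\<^bsub>G\<lparr>carrier := H1\<rparr>\<^esub> H)"
      "card (rcosets\<^bsub>G\<lparr>carrier := K\<rparr>\<^esub> H) = card (rcosets\<^bsub>G\<lparr>carrier := K\<rparr>\<^esub> H1) * card (rcosets\<^bsub>G\<lparr>carrier := H1\<rparr>\<^esub> H)"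
      by auto
    have "q dvd card (rcosets\<^bsub>G\<lparr>carrier := K\<rparr>\<^esub> H)" using Cons(7) hdH lastK by simp
    hence "q dvd card (rcosets\<^bsub>G\<lparr>carrier := K\<rparr>\<^esub> H1) \<or> q dvd card (rcosets\<^bsub>G\<lparr>carrier := H1\<rparr>\<^esub> H)"
      using im(3) prime_dvd_mult_iff[OF q] by simp
    thus ?thesis
    proof
      assume qd: "q dvd card (rcosets\<^bsub>G\<lparr>carrier := K\<rparr>\<^esub> H1)"
      have "\<exists>g\<in>K. g [^] q \<in> H1 \<and> g \<notin> H1"
        using Cons(1)[OF False _ _ c] H1s Ks im(1) qd unfolding H1_def K_def by simp
      then obtain g where g: "g \<in> K" "g [^] q \<in> H1" "g \<notin> H1" by blast
      have gc: "g \<in> carrier G" using g(1) subgroup.subset[OF Ks] by auto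
      obtain N :: nat where N: "0 < N" "(g [^] q) [^]\<^bsub>G\<lparr>carrier := H1\<rparr>\<^esub> N \<in> H"
        using pow_in_normal[OF nH im(2), of "g [^] q"] g(2) by auto
      have "g [^] (q * N) \<in> H" using N(2) gc by (simp add: pow_restrict nat_pow_pow)
      moreover have "0 < q * N" using N(1) q1 by simp
      ultimately obtain m :: nat where m: "(g [^] m) [^] q \<in> H" "g [^] m \<notin> H"
        using rel_lift[OF G Hs H1s HH1 gc q g(2) g(3)] by blast
      have "g [^] m \<in> K" by (rule subgroup_pow_closed[OF Ks g(1)])
      thus ?thesis using m hdH lastK by auto
    next
      assume qd: "q dvd card (rcosets\<^bsub>G\<lparr>carrier := H1\<rparr>\<^esub> H)"
      let ?Q = "G\<lparr>carrier := H1\<rparr> Mod H"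
      have gQ: "group ?Q" by (rule normal.factorgroup_is_group[OF nH])
      have cQ: "carrier ?Q = rcosets\<^bsub>G\<lparr>carrier := H1\<rparr>\<^esub> H" by (simp add: FactGroup_def)
      have "\<exists>y\<in>carrier ?Q. y \<noteq> \<one>\<^bsub>?Q\<^esub> \<and> y [^]\<^bsub>?Q\<^esub> q = \<one>\<^bsub>?Q\<^esub>"
        by (rule cauchy[OF gQ]) (use im(2) q qd cQ in \<open>simp_all add: order_def\<close>)
      then obtain y where y: "y \<in> carrier ?Q" "y \<noteq> \<one>\<^bsub>?Q\<^esub>" "y [^]\<^bsub>?Q\<^esub> q = \<one>\<^bsub>?Q\<^esub>" by blast
      obtain x where x: "x \<in> H1" "y = H #>\<^bsub>G\<lparr>carrier := H1\<rparr>\<^esub> x"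
        using y(1) cQ unfolding RCOSETS_def by auto
      have xc: "x \<in> carrier G" using x(1) subgroup.subset[OF H1s] by auto
      have "y [^]\<^bsub>?Q\<^esub> q = H #>\<^bsub>G\<lparr>carrier := H1\<rparr>\<^esub> (x [^]\<^bsub>G\<lparr>carrier := H1\<rparr>\<^esub> q)"
        unfolding x(2) by (rule coset_pow[OF nH]) (use x(1) in simp)
      hence "H #> (x [^] q) = H" using y(3) by (simp add: rcoset_restrict pow_restrict FactGroup_def)
      hence xq: "x [^] q \<in> H" by (rule coset_join1[OF _ _ Hs]) (use xc in simp)
      have xn: "x \<notin> H"
      proof
        assume "x \<in> H"
        hence "H #> x = H" by (rule coset_join2[OF xc Hs])
        hence "y = \<one>\<^bsub>?Q\<^esub>" using x(2) by (simp add: rcoset_restrict FactGroup_def)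
        thus False using y(2) by simp
      qed
      have "x \<in> K" using x(1) H1K by auto
      thus ?thesis using xq xn hdH lastK by auto
    qed
  qed
qed

theorem mainTheorem11:
  fixes G (structure) and H :: "'a set" and q :: nat
  assumes "group G"
    and "subgroup H G"
    and "subnormal H G"
    and "finite (rcosets\<^bsub>G\<^esub> H)"
    and "Factorial_Ring.prime q"
    and "q dvd card (rcosets\<^bsub>G\<^esub> H)"
  shows "\<exists>g \<in> carrier G. rel_ord G H g = q"
proof -
  interpret group G by fact
  obtain Hs where Hs: "Hs \<noteq> []" "hd Hs = H" "last Hs = carrier G"
    "\<forall>j. Suc j < length Hs \<longrightarrow> subgroup (Hs ! Suc j) G \<and> normal (Hs ! j) (G\<lparr>carrier := Hs ! Suc j\<rparr>)"
    using assms(3) unfolding subnormal_def by blast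
  have GG: "G\<lparr>carrier := carrier G\<rparr> = G" by simp
  have "\<exists>g \<in> last Hs. g [^] q \<in> hd Hs \<and> g \<notin> hd Hs"
    by (rule chain_main[OF assms(1,5) Hs(1) _ _ Hs(4)])
       (use Hs(2,3) assms(2,4,6) subgroup_self GG in simp_all)
  then obtain g where g: "g \<in> carrier G" "g [^] q \<in> H" "g \<notin> H" using Hs(2,3) by auto
  show ?thesis using rel_ord_prime[OF assms(1,2) g(1) assms(5) g(2,3)] g(1) by blast
qed

end
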